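(* Let $X$ be a standard one-dimensional Brownian motion starting at $0$ on $(\Omega,\mathcal{F},\mathbb{P})$, $p$ the atomic proposition with $X(\omega),t\models p$ iff $X_t(\omega)\geq1$, $\tau_p(\omega):=\inf\{t\geq0 : X_t(\omega)\geq1\}$, and $\phi_1:=\Box_{(1,2)}(\Diamond_{(1,4)}p\wedge\lnot\Diamond_{(1,3)}p)$, $\phi_2:=(\Diamond_{(1,3)}\phi_1)\wedge(\lnot\Diamond_{(1,2)}\phi_1)\wedge(\lnot\Diamond_{(2,3)}\phi_1)$, $\phi_3:=\Diamond_{(1,2)}\phi_2$, $\psi:=(\lnot p)\wedge(\lnot\Diamond_{(0,8)}p)\wedge\phi_3$. Then almost surely, $X(\omega),0\models\psi$ holds if and only if $\tau_p(\omega)\in(8,9)$. In particular $\mathbb{P}(\omega : X(\omega),0\models\psi)>0$.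
   Context: Continuous semantics: $\lnot,\wedge$ classical; $X(\omega),t\models\Diamond_I\phi$ iff $\exists s\in I$ with $X(\omega),t+s\models\phi$; $X(\omega),t\models\Box_I\phi$ iff $\forall s\in I$, $X(\omega),t+s\models\phi$. *)

theory Defs
  imports "HOL-Probability.Probability"
begin

definition std_brownian_motion :: "'w measure \<Rightarrow> (real \<Rightarrow> 'w \<Rightarrow> real) \<Rightarrow> bool" where
  "std_brownian_motion M X \<longleftrightarrow>
     prob_space M \<and>
     (\<forall>t\<ge>0. X t \<in> borel_measurable M) \<and>
     (\<forall>\<omega>\<in>space M. X 0 \<omega> = 0) \<and>
     (\<forall>\<omega>\<in>space M. continuous_on {0..} (\<lambda>t. X t \<omega>)) \<and>
     (\<forall>s t. 0 \<le> s \<and> s < t \<longrightarrow>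
        distributed M lborel (\<lambda>\<omega>. X t \<omega> - X s \<omega>)
          (\<lambda>x. ennreal (normal_density 0 (sqrt (t - s)) x))) \<and>
     (\<forall>(ts :: nat \<Rightarrow> real) n. 0 \<le> ts 0 \<and> strict_mono ts \<longrightarrow>
        prob_space.indep_vars M (\<lambda>_. borel) (\<lambda>i \<omega>. X (ts (Suc i)) \<omega> - X (ts i) \<omega>) {..<n})"

datatype 'a mtl =
    Atom 'a
  | Neg "'a mtl"
  | Conj "'a mtl" "'a mtl"
  | Dia "real set" "'a mtl"
  | Bx "real set" "'a mtl"

fun sat :: "('a \<Rightarrow> (real \<Rightarrow> real) \<Rightarrow> real \<Rightarrow> bool) \<Rightarrow> (real \<Rightarrow> real) \<Rightarrow> real \<Rightarrow> 'a mtl \<Rightarrow> bool" where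
  "sat L x t (Atom a) = L a x t"
| "sat L x t (Neg \<phi>) = (\<not> sat L x t \<phi>)"
| "sat L x t (Conj \<phi> \<psi>) = (sat L x t \<phi> \<and> sat L x t \<psi>)"
| "sat L x t (Dia I \<phi>) = (\<exists>s\<in>I. sat L x (t + s) \<phi>)"
| "sat L x t (Bx I \<phi>) = (\<forall>s\<in>I. sat L x (t + s) \<phi>)"

definition L_p :: "unit \<Rightarrow> (real \<Rightarrow> real) \<Rightarrow> real \<Rightarrow> bool" where
  "L_p a x t \<longleftrightarrow> x t \<ge> 1"

definition p :: "unit mtl" where "p = Atom ()"

definition phi1 :: "unit mtl" where
  "phi1 = Bx {1<..<2} (Conj (Dia {1<..<4} p) (Neg (Dia {1<..<3} p)))"
definition phi2 :: "unit mtl" where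
  "phi2 = Conj (Dia {1<..<3} phi1) (Conj (Neg (Dia {1<..<2} phi1)) (Neg (Dia {2<..<3} phi1)))"
definition phi3 :: "unit mtl" where
  "phi3 = Dia {1<..<2} phi2"
definition psi :: "unit mtl" where
  "psi = Conj (Neg p) (Conj (Neg (Dia {0<..<8} p)) phi3)"

text \<open>Hitting time of level 1, with inf of the empty set = +oo.\<close>
definition hit_time :: "(real \<Rightarrow> real) \<Rightarrow> ereal" where
  "hit_time x = Inf {ereal t | t. t \<ge> 0 \<and> x t \<ge> 1}"

end

theory Submission
  imports Defs "HOL-Analysis.Analysis"
begin


lemma phi1_iff:
  assumes cont: "continuous_on {0..} x" and T: "0 \<le> T"
  shows "sat L_p x T phi1 \<longleftrightarrow> (1 \<le> x (T+5) \<and> (\<forall>t\<in>{T+2<..<T+5}. x t < 1))"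
proof -
  have unf: "sat L_p x T phi1 \<longleftrightarrow> (\<forall>s\<in>{1<..<2}. (\<exists>a\<in>{1<..<4}. 1 \<le> x (T+s+a)) \<and> \<not>(\<exists>a\<in>{1<..<3}. 1 \<le> x (T+s+a)))"
    by (simp add: phi1_def p_def L_p_def)
  show ?thesis
  proof
    assume H: "sat L_p x T phi1"
    hence H': "\<forall>s\<in>{1<..<2}. (\<exists>a\<in>{1<..<4}. 1 \<le> x (T+s+a)) \<and> \<not>(\<exists>a\<in>{1<..<3}. 1 \<le> x (T+s+a))"
      using unf by blast
    have nohit: "\<forall>t\<in>{T+2<..<T+5}. x t < 1"
    proof
      fix t assume t: "t \<in> {T+2<..<T+5}"
      define s where "s = 1 + (t - T - 2)/3"
      define a where "a = t - T - s"
      have s: "s \<in> {1<..<2}" using t by (auto simp: s_def)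
      have a: "a \<in> {1<..<3}" using t by (auto simp: a_def s_def field_simps)
      have "T + s + a = t" by (simp add: a_def)
      then show "x t < 1" using H' s a by (metis not_le)
    qed
    have "1 \<le> x (T+5)"
    proof (rule ccontr)
      assume "\<not> 1 \<le> x (T+5)"
      hence lt: "x (T+5) < 1" by simp
      have "T+5 \<in> {0..}" using T by simp
      then obtain d where d: "d > 0" "\<And>t. t \<in> {0..} \<Longrightarrow> dist t (T+5) < d \<Longrightarrow> dist (x t) (x (T+5)) < 1 - x (T+5)"
        using cont lt unfolding continuous_on_iff by (metis diff_gt_0_iff_gt)
      define s where "s = 1 + min (d/2) (1/2)"
      have s: "s \<in> {1<..<2}" using d by (auto simp: s_def)
      then obtain a where a: "a \<in> {1<..<4}" "1 \<le> x (T+s+a)" "\<not>(\<exists>a\<in>{1<..<3}. 1 \<le> x (T+s+a))"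
        using H' by blast
      have "a \<ge> 3" using a by force
      have "\<not> (T+s+a \<in> {T+2<..<T+5})" using nohit a(2) by (metis not_le)
      hence ge: "T+s+a \<ge> T+5" using s \<open>a \<ge> 3\<close> by auto
      have "T+s+a < T+5+d" using a(1) d by (auto simp: s_def)
      hence "dist (T+s+a) (T+5) < d" using ge by (simp add: dist_real_def)
      hence "dist (x (T+s+a)) (x (T+5)) < 1 - x (T+5)" using d(2)[of "T+s+a"] T s a by auto
      thus False using a(2) by (simp add: dist_real_def abs_if split: if_splits)
    qed
    with nohit show "1 \<le> x (T+5) \<and> (\<forall>t\<in>{T+2<..<T+5}. x t < 1)" by blast
  next
    assume R: "1 \<le> x (T+5) \<and> (\<forall>t\<in>{T+2<..<T+5}. x t < 1)"
    have "\<forall>s\<in>{1<..<2}. (\<exists>a\<in>{1<..<4}. 1 \<le> x (T+s+a)) \<and> \<not>(\<exists>a\<in>{1<..<3}. 1 \<le> x (T+s+a))"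
    proof
      fix s :: real assume s: "s \<in> {1<..<2}"
      have "5 - s \<in> {1<..<4}" "T + s + (5 - s) = T + 5" using s by auto
      hence e: "\<exists>a\<in>{1<..<4}. 1 \<le> x (T+s+a)" using R by metis
      have "\<not>(\<exists>a\<in>{1<..<3}. 1 \<le> x (T+s+a))"
      proof
        assume "\<exists>a\<in>{1<..<3}. 1 \<le> x (T+s+a)"
        then obtain a where "a\<in>{1<..<3}" "1 \<le> x (T+s+a)" by blast
        moreover have "T+s+a \<in> {T+2<..<T+5}" using s \<open>a\<in>{1<..<3}\<close> by auto
        ultimately show False using R by (metis not_le)
      qed
      with e show "(\<exists>a\<in>{1<..<4}. 1 \<le> x (T+s+a)) \<and> \<not>(\<exists>a\<in>{1<..<3}. 1 \<le> x (T+s+a))" by blast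
    qed
    thus "sat L_p x T phi1" using unf by blast
  qed
qed

definition Cp :: "(real \<Rightarrow> real) \<Rightarrow> bool" where
  "Cp x \<longleftrightarrow> (\<exists>v\<in>{8<..<9}. 1 \<le> x v \<and> (\<forall>t\<in>{0..<v}. x t < 1))"

lemma psi_iff:
  assumes cont: "continuous_on {0..} x" and x0: "x 0 = 0"
  shows "sat L_p x 0 psi \<longleftrightarrow> Cp x"
proof -
  have P1: "\<And>T. 0 \<le> T \<Longrightarrow> sat L_p x T phi1 \<longleftrightarrow> (1 \<le> x (T+5) \<and> (\<forall>t\<in>{T+2<..<T+5}. x t < 1))"
    using phi1_iff[OF cont] by blast
  have unf: "sat L_p x 0 psi \<longleftrightarrow> \<not>(1 \<le> x 0) \<and> \<not>(\<exists>s\<in>{0<..<8}. 1 \<le> x s) \<and>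
     (\<exists>s\<in>{1<..<2}. (\<exists>r\<in>{1<..<3}. sat L_p x (s+r) phi1) \<and> \<not>(\<exists>r\<in>{1<..<2}. sat L_p x (s+r) phi1)
        \<and> \<not>(\<exists>r\<in>{2<..<3}. sat L_p x (s+r) phi1))"
    by (simp add: psi_def phi3_def phi2_def p_def L_p_def)
  show ?thesis
  proof
    assume "sat L_p x 0 psi"
    then obtain s r where nh: "\<not>(\<exists>s\<in>{0<..<8}. 1 \<le> x s)" and s: "s \<in> {1<..<2}" and r: "r \<in> {1<..<3}"
      and ph: "sat L_p x (s+r) phi1" and n1: "\<not>(\<exists>r\<in>{1<..<2}. sat L_p x (s+r) phi1)"
      and n2: "\<not>(\<exists>r\<in>{2<..<3}. sat L_p x (s+r) phi1)"
      using unf by blast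
    have "r = 2"
    proof (rule ccontr)
      assume "r \<noteq> 2"
      hence "r \<in> {1<..<2} \<or> r \<in> {2<..<3}" using r by auto
      thus False using n1 n2 ph by blast
    qed
    hence "1 \<le> x (s+7)" and nh2: "\<forall>t\<in>{s+4<..<s+7}. x t < 1"
      using P1[of "s+2"] ph s by (auto simp: add_ac)
    moreover have "\<forall>t\<in>{0..<s+7}. x t < 1"
    proof
      fix t assume t: "t \<in> {0..<s+7}"
      show "x t < 1"
      proof (cases "t < 8")
        case True
        show ?thesis
        proof (cases "t = 0")
          case True then show ?thesis using x0 by simp
        next
          case False then show ?thesis using t \<open>t < 8\<close> nh by (metis greaterThanLessThan_iff atLeastLessThan_iff less_eq_real_def not_le)
        qed
      next
        case False
        then show ?thesis using nh2 t s by auto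
      qed
    qed
    moreover have "s + 7 \<in> {8<..<9}" using s by auto
    ultimately show "Cp x" unfolding Cp_def by blast
  next
    assume "Cp x"
    then obtain v where v: "v \<in> {8<..<9}" "1 \<le> x v" and bef: "\<forall>t\<in>{0..<v}. x t < 1"
      unfolding Cp_def by blast
    define s where "s = v - 7"
    have s: "s \<in> {1<..<2}" using v by (auto simp: s_def)
    have a: "\<not>(1 \<le> x 0)" using x0 by simp
    have b: "\<not>(\<exists>s\<in>{0<..<8}. 1 \<le> x s)" using bef v by (auto simp: not_le)
    have c: "sat L_p x (s+2) phi1"
      using P1[of "s+2"] s v bef by (auto simp: s_def)
    have d: "\<not>(\<exists>r\<in>{1<..<2}. sat L_p x (s+r) phi1)"
    proof
      assume "\<exists>r\<in>{1<..<2}. sat L_p x (s+r) phi1"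
      then obtain r where r: "r \<in> {1<..<2}" "sat L_p x (s+r) phi1" by blast
      hence "1 \<le> x (s+r+5)" using P1[of "s+r"] s by auto
      moreover have "s+r+5 \<in> {0..<v}" using r s by (auto simp: s_def)
      ultimately show False using bef by (metis not_le)
    qed
    have e: "\<not>(\<exists>r\<in>{2<..<3}. sat L_p x (s+r) phi1)"
    proof
      assume "\<exists>r\<in>{2<..<3}. sat L_p x (s+r) phi1"
      then obtain r where r: "r \<in> {2<..<3}" "sat L_p x (s+r) phi1" by blast
      hence "\<forall>t\<in>{s+r+2<..<s+r+5}. x t < 1" using P1[of "s+r"] s by auto
      moreover have "v \<in> {s+r+2<..<s+r+5}" using r s by (auto simp: s_def)
      ultimately show False using v by (metis not_le)
    qed
    have "(2::real) \<in> {1<..<3}" by simp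
    hence "\<exists>r\<in>{1<..<3}. sat L_p x (s+r) phi1" using c by blast
    with a b d e s show "sat L_p x 0 psi" using unf by blast
  qed
qed

definition C :: "(real \<Rightarrow> real) \<Rightarrow> bool" where
  "C x \<longleftrightarrow> (\<forall>t\<in>{0..8}. x t < 1) \<and> (\<exists>v\<in>{8<..<9}. 1 \<le> x v)"

lemma Cp_iff_C:
  assumes cont: "continuous_on {0..} x"
  shows "Cp x \<longleftrightarrow> C x"
proof
  assume "Cp x" then show "C x" unfolding Cp_def C_def by force
next
  assume "C x"
  then obtain v where v: "v \<in> {8<..<9}" "1 \<le> x v" and b8: "\<forall>t\<in>{0..8}. x t < 1"
    unfolding C_def by blast
  define H where "H = {t \<in> {8..v}. (\<lambda>_. 1) t \<le> x t}"
  have cH: "closed H" unfolding H_def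
    by (rule continuous_on_closed_Collect_le[OF continuous_on_const continuous_on_subset[OF cont]]) auto
  have vH: "v \<in> H" using v by (auto simp: H_def)
  have bH: "bdd_below H" unfolding H_def by (rule bdd_belowI[of _ 8]) auto
  define w where "w = Inf H"
  have wH: "w \<in> H" unfolding w_def using closed_contains_Inf[OF _ bH cH] vH by blast
  have wle: "\<And>t. t \<in> H \<Longrightarrow> w \<le> t" unfolding w_def using bH by (simp add: cInf_lower)
  have "x w \<ge> 1" using wH by (simp add: H_def)
  moreover have "x 8 < 1" using b8 by simp
  ultimately have "w \<noteq> 8" by auto
  hence w: "w \<in> {8<..<9}" using wH v by (auto simp: H_def)
  have "\<forall>t\<in>{0..<w}. x t < 1"
  proof
    fix t assume t: "t \<in> {0..<w}"
    show "x t < 1"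
    proof (cases "t \<le> 8")
      case True thus ?thesis using b8 t by auto
    next
      case False
      hence "t \<notin> H" using wle t by force
      moreover have "t \<le> v" using t wH by (auto simp: H_def)
      ultimately show ?thesis using False by (auto simp: H_def)
    qed
  qed
  thus "Cp x" unfolding Cp_def using w wH by (auto simp: H_def)
qed

lemma hit_iff:
  assumes cont: "continuous_on {0..} x"
  shows "hit_time x \<in> {ereal 8<..<ereal 9} \<longleftrightarrow> Cp x"
proof
  assume h: "hit_time x \<in> {ereal 8<..<ereal 9}"
  let ?H = "{ereal t | t. t \<ge> 0 \<and> x t \<ge> 1}"
  have "Inf ?H < ereal 9" using h by (simp add: hit_time_def)
  then obtain e where e: "e \<in> ?H" "e < ereal 9" by (auto simp: Inf_less_iff)
  then obtain v where ev: "e = ereal v" "v \<ge> 0" "x v \<ge> 1" by blast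
  have low: "\<And>t. t \<ge> 0 \<Longrightarrow> x t \<ge> 1 \<Longrightarrow> 8 < t"
  proof -
    fix t assume "t \<ge> 0" "x t \<ge> 1"
    hence "Inf ?H \<le> ereal t" by (blast intro: Inf_lower)
    moreover have "ereal 8 < Inf ?H" using h by (simp add: hit_time_def)
    ultimately have "ereal 8 < ereal t" by (rule less_le_trans[rotated])
    thus "8 < t" by simp
  qed
  have "C x" unfolding C_def
  proof
    show "\<forall>t\<in>{0..8}. x t < 1" using low by force
    show "\<exists>v\<in>{8<..<9}. 1 \<le> x v" using low[of v] ev e by auto
  qed
  thus "Cp x" using Cp_iff_C[OF cont] by blast
next
  assume "Cp x"
  then obtain v where v: "v \<in> {8<..<9}" "1 \<le> x v" and bef: "\<forall>t\<in>{0..<v}. x t < 1"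
    unfolding Cp_def by blast
  let ?H = "{ereal t | t. t \<ge> 0 \<and> x t \<ge> 1}"
  have "Inf ?H = ereal v"
  proof (rule antisym)
    show "Inf ?H \<le> ereal v" using v by (intro Inf_lower) auto
    show "ereal v \<le> Inf ?H"
    proof (rule Inf_greatest)
      fix e assume "e \<in> ?H"
      then obtain t where "e = ereal t" "t \<ge> 0" "x t \<ge> 1" by blast
      moreover have "\<not> t < v" using bef \<open>t \<ge> 0\<close> \<open>x t \<ge> 1\<close> by force
      ultimately show "ereal v \<le> e" by simp
    qed
  qed
  thus "hit_time x \<in> {ereal 8<..<ereal 9}" using v by (simp add: hit_time_def)
qed

lemma dense_le:
  fixes x :: "real \<Rightarrow> real"
  assumes cont: "continuous_on {0..} x" and ab: "0 \<le> a" "a < b"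
    and H: "\<forall>q::rat. real_of_rat q \<in> {a..b} \<longrightarrow> x (real_of_rat q) \<le> c"
  shows "\<forall>t\<in>{a..b}. x t \<le> c"
proof
  fix t assume t: "t \<in> {a..b}"
  show "x t \<le> c"
  proof (rule ccontr)
    assume "\<not> x t \<le> c"
    hence xt: "x t - c > 0" by simp
    have "t \<in> {0..}" using t ab by auto
    then obtain d where d: "d > 0" "\<And>t'. t' \<in> {0..} \<Longrightarrow> dist t' t < d \<Longrightarrow> dist (x t') (x t) < x t - c"
      using cont xt unfolding continuous_on_iff by metis
    have "max (t-d) a < min (t+d) b" using d t ab by auto
    then obtain r where r: "r \<in> \<rat>" "max (t-d) a < r" "r < min (t+d) b" using Rats_dense_in_real by blast
    then obtain q where q: "r = real_of_rat q" by (auto elim: Rats_cases)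
    have "r \<in> {a..b}" using r by auto
    hence "x r \<le> c" using H q by blast
    moreover have "dist (x r) (x t) < x t - c" using d(2)[of r] r ab by (auto simp: dist_real_def)
    ultimately show False by (auto simp: dist_real_def)
  qed
qed

lemma maxlt:
  fixes x :: "real \<Rightarrow> real"
  assumes cont: "continuous_on {0..} x" and ab: "0 \<le> a" "a < b"
  shows "(\<forall>t\<in>{a..b}. x t < 1) \<longleftrightarrow>
     (\<exists>n::nat. \<forall>q::rat. real_of_rat q \<in> {a..b} \<longrightarrow> x (real_of_rat q) \<le> 1 - inverse (real (Suc n)))"
proof
  assume A: "\<forall>t\<in>{a..b}. x t < 1"
  have "continuous_on {a..b} x" using ab by (intro continuous_on_subset[OF cont]) auto
  then obtain m where m: "m \<in> {a..b}" "\<forall>y\<in>{a..b}. x y \<le> x m"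
    using continuous_attains_sup[of "{a..b}" x] ab by auto
  have "1 - x m > 0" using A m by auto
  then obtain n where n: "inverse (real (Suc n)) < 1 - x m" using reals_Archimedean by blast
  show "\<exists>n::nat. \<forall>q::rat. real_of_rat q \<in> {a..b} \<longrightarrow> x (real_of_rat q) \<le> 1 - inverse (real (Suc n))"
  proof (intro exI[of _ n] allI impI)
    fix q :: rat assume "real_of_rat q \<in> {a..b}"
    hence "x (real_of_rat q) \<le> x m" using m by blast
    thus "x (real_of_rat q) \<le> 1 - inverse (real (Suc n))" using n by linarith
  qed
next
  assume "\<exists>n::nat. \<forall>q::rat. real_of_rat q \<in> {a..b} \<longrightarrow> x (real_of_rat q) \<le> 1 - inverse (real (Suc n))"
  then obtain n where "\<forall>q::rat. real_of_rat q \<in> {a..b} \<longrightarrow> x (real_of_rat q) \<le> 1 - inverse (real (Suc n))" by blast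
  from dense_le[OF cont ab this] show "\<forall>t\<in>{a..b}. x t < 1"
    by (smt (verit) inverse_positive_iff_positive of_nat_0_less_iff zero_less_Suc)
qed

definition Cq :: "(real \<Rightarrow> real) \<Rightarrow> bool" where
  "Cq x \<longleftrightarrow> (\<exists>n::nat. \<forall>q::rat. real_of_rat q \<in> {0..8} \<longrightarrow> x (real_of_rat q) \<le> 1 - inverse (real (Suc n))) \<and>
     (\<exists>r::rat. real_of_rat r \<in> {8<..<9} \<and> \<not> (\<exists>n::nat. \<forall>q::rat. real_of_rat q \<in> {8..real_of_rat r} \<longrightarrow> x (real_of_rat q) \<le> 1 - inverse (real (Suc n))))"

lemma C_iff_Cq:
  fixes x :: "real \<Rightarrow> real"
  assumes cont: "continuous_on {0..} x"
  shows "C x \<longleftrightarrow> Cq x"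
proof -
  have z: "0 \<le> (0::real)" "0 < (8::real)" by auto
  note e1 = maxlt[OF cont z]
  have e2: "(\<forall>t\<in>{0..8}. x t < 1) \<Longrightarrow> (\<exists>v\<in>{8<..<9}. 1 \<le> x v) \<longleftrightarrow> (\<exists>r::rat. real_of_rat r \<in> {8<..<9} \<and> \<not> (\<forall>t\<in>{8..real_of_rat r}. x t < 1))"
  proof
    assume "\<exists>v\<in>{8<..<9}. 1 \<le> x v"
    then obtain v where v: "v \<in> {8<..<9}" "1 \<le> x v" by blast
    have "v < 9" using v by simp
    then obtain r where r: "r \<in> \<rat>" "v < r" "r < 9" using Rats_dense_in_real[of v 9] by blast
    from r(1) obtain q where q: "r = real_of_rat q" by (rule Rats_cases) simp
    show "\<exists>r::rat. real_of_rat r \<in> {8<..<9} \<and> \<not> (\<forall>t\<in>{8..real_of_rat r}. x t < 1)"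
    proof (intro exI[of _ q] conjI)
      show "real_of_rat q \<in> {8<..<9}" using v r unfolding q[symmetric] by simp
      have "v \<in> {8..real_of_rat q}" using v r unfolding q[symmetric] by simp
      thus "\<not> (\<forall>t\<in>{8..real_of_rat q}. x t < 1)" using v(2) by (metis not_le)
    qed
  next
    assume b8: "\<forall>t\<in>{0..8}. x t < 1"
    assume "\<exists>r::rat. real_of_rat r \<in> {8<..<9} \<and> \<not> (\<forall>t\<in>{8..real_of_rat r}. x t < 1)"
    then obtain r :: rat and t where r: "real_of_rat r \<in> {8<..<9}" "t \<in> {8..real_of_rat r}" "\<not> x t < 1" by blast
    have "x 8 < 1" using b8 by simp
    hence "t \<noteq> 8" using r(3) by auto
    hence "t \<in> {8<..<9}" using r(1,2) by simp
    thus "\<exists>v\<in>{8<..<9}. 1 \<le> x v" using r(3) by (metis not_le)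
  qed
  have e3: "(\<forall>t\<in>{8..real_of_rat r}. x t < 1) \<longleftrightarrow> (\<exists>n::nat. \<forall>q::rat. real_of_rat q \<in> {8..real_of_rat r} \<longrightarrow> x (real_of_rat q) \<le> 1 - inverse (real (Suc n)))"
    if "real_of_rat r \<in> {8<..<9}" for r :: rat
  proof -
    have "0 \<le> (8::real)" "8 < real_of_rat r" using that by auto
    from maxlt[OF cont this] show ?thesis .
  qed
  show ?thesis
  proof
    assume "C x"
    hence A: "\<forall>t\<in>{0..8}. x t < 1" and B: "\<exists>v\<in>{8<..<9}. 1 \<le> x v" unfolding C_def by blast+
    from e2[OF A] B obtain r :: rat where r: "real_of_rat r \<in> {8<..<9}" "\<not> (\<forall>t\<in>{8..real_of_rat r}. x t < 1)" by blast
    show "Cq x" unfolding Cq_def using e1 A e3[OF r(1)] r by blast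
  next
    assume "Cq x"
    then obtain r :: rat where A': "\<exists>n::nat. \<forall>q::rat. real_of_rat q \<in> {0..8} \<longrightarrow> x (real_of_rat q) \<le> 1 - inverse (real (Suc n))"
      and r: "real_of_rat r \<in> {8<..<9}" "\<not> (\<exists>n::nat. \<forall>q::rat. real_of_rat q \<in> {8..real_of_rat r} \<longrightarrow> x (real_of_rat q) \<le> 1 - inverse (real (Suc n)))"
      unfolding Cq_def by blast
    have A: "\<forall>t\<in>{0..8}. x t < 1" using e1 A' by blast
    have "\<not> (\<forall>t\<in>{8..real_of_rat r}. x t < 1)" using e3[OF r(1)] r(2) by blast
    hence "\<exists>v\<in>{8<..<9}. 1 \<le> x v" using e2[OF A] r(1) by blast
    thus "C x" unfolding C_def using A by blast
  qed
qed

lemma pred_rat: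
  fixes X :: "real \<Rightarrow> 'a \<Rightarrow> real"
  assumes meas: "\<And>t. 0 \<le> t \<Longrightarrow> X t \<in> borel_measurable M" and a: "0 \<le> a"
  shows "Measurable.pred M (\<lambda>\<omega>. \<forall>q::rat. real_of_rat q \<in> {a..b} \<longrightarrow> X (real_of_rat q) \<omega> \<le> c)"
proof (rule pred_intros_countable(1)[where P="\<lambda>\<omega> q. real_of_rat q \<in> {a..b} \<longrightarrow> X (real_of_rat q) \<omega> \<le> c"])
  fix q :: rat
  show "Measurable.pred M (\<lambda>\<omega>. real_of_rat q \<in> {a..b} \<longrightarrow> X (real_of_rat q) \<omega> \<le> c)"
  proof (cases "real_of_rat q \<in> {a..b}")
    case True
    have [measurable]: "X (real_of_rat q) \<in> borel_measurable M" proof -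
      have "a \<le> real_of_rat q" using True by simp
      hence "0 \<le> real_of_rat q" using a by linarith
      thus ?thesis by (rule meas)
    qed
    have "Measurable.pred M (\<lambda>\<omega>. X (real_of_rat q) \<omega> \<le> c)" by measurable
    thus ?thesis using True by simp
  next
    case False thus ?thesis by (simp only: simp_thms) (simp add: pred_def)
  qed
qed

lemma Cq_meas:
  assumes meas: "\<And>t. 0 \<le> t \<Longrightarrow> X t \<in> borel_measurable M"
  shows "{\<omega> \<in> space M. Cq (\<lambda>t. X t \<omega>)} \<in> sets M"
proof -
  have p1: "Measurable.pred M (\<lambda>\<omega>. \<exists>n::nat. \<forall>q::rat. real_of_rat q \<in> {a..b} \<longrightarrow> X (real_of_rat q) \<omega> \<le> 1 - inverse (real (Suc n)))"
    if "0 \<le> a" for a b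
    by (rule pred_intros_countable(2)[where P="\<lambda>\<omega> n. \<forall>q::rat. real_of_rat q \<in> {a..b} \<longrightarrow> X (real_of_rat q) \<omega> \<le> 1 - inverse (real (Suc n))"])
       (rule pred_rat[OF meas that])
  have p8: "0 \<le> (8::real)" by simp
  have p0: "0 \<le> (0::real)" by simp
  have p2: "Measurable.pred M (\<lambda>\<omega>. \<exists>r::rat. real_of_rat r \<in> {8<..<9} \<and> \<not> (\<exists>n::nat. \<forall>q::rat. real_of_rat q \<in> {8..real_of_rat r} \<longrightarrow> X (real_of_rat q) \<omega> \<le> 1 - inverse (real (Suc n))))"
  proof (rule pred_intros_countable(2)[where P="\<lambda>\<omega> r. real_of_rat r \<in> {8<..<9} \<and> \<not> (\<exists>n::nat. \<forall>q::rat. real_of_rat q \<in> {8..real_of_rat r} \<longrightarrow> X (real_of_rat q) \<omega> \<le> 1 - inverse (real (Suc n)))"])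
    fix r :: rat
    show "Measurable.pred M (\<lambda>\<omega>. real_of_rat r \<in> {8<..<9} \<and> \<not> (\<exists>n::nat. \<forall>q::rat. real_of_rat q \<in> {8..real_of_rat r} \<longrightarrow> X (real_of_rat q) \<omega> \<le> 1 - inverse (real (Suc n))))"
    proof (rule pred_intros_logic(3))
      show "Measurable.pred M (\<lambda>\<omega>. real_of_rat r \<in> {8<..<9})" by (cases "real_of_rat r \<in> {8<..<9}") (simp_all add: pred_def)
      show "Measurable.pred M (\<lambda>\<omega>. \<not> (\<exists>n::nat. \<forall>q::rat. real_of_rat q \<in> {8..real_of_rat r} \<longrightarrow> X (real_of_rat q) \<omega> \<le> 1 - inverse (real (Suc n))))"
        by (rule pred_intros_logic(2)) (rule p1[OF p8])
    qed
  qed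
  have "Measurable.pred M (\<lambda>\<omega>. Cq (\<lambda>t. X t \<omega>))" unfolding Cq_def
    by (rule pred_intros_logic(3)[OF p1[OF p0] p2])
  thus ?thesis by (simp add: pred_def)
qed



lemma normal_half:
  fixes Z :: "'w \<Rightarrow> real"
  assumes ps: "prob_space M" and D: "distributed M lborel Z (\<lambda>x. ennreal (normal_density 0 \<sigma> x))" and s: "0 < \<sigma>"
  shows "measure M {\<omega> \<in> space M. Z \<omega> \<le> 0} = 1/2"
proof -
  interpret prob_space M by (rule ps)
  have Zm[measurable]: "Z \<in> borel_measurable M" using distributed_measurable[OF D] by (simp add: measurable_lborel2)
  have D2: "distributed M lborel (\<lambda>x. 0 + (-1) * Z x) (\<lambda>x. ennreal (normal_density (0 + (-1) * 0) (\<bar>-1\<bar> * \<sigma>) x))"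
    by (rule normal_density_affine[OF D s]) simp
  hence D2': "distributed M lborel (\<lambda>x. - Z x) (\<lambda>x. ennreal (normal_density 0 \<sigma> x))" by simp
  have e1: "emeasure M {\<omega> \<in> space M. Z \<omega> \<le> 0} = (\<integral>\<^sup>+x. ennreal (normal_density 0 \<sigma> x) * indicator {..0} x \<partial>lborel)"
  proof -
    have "{\<omega> \<in> space M. Z \<omega> \<le> 0} = Z -` {..0} \<inter> space M" by auto
    thus ?thesis using distributed_emeasure[OF D, of "{..0}"] by simp
  qed
  have e2: "emeasure M {\<omega> \<in> space M. Z \<omega> \<ge> 0} = (\<integral>\<^sup>+x. ennreal (normal_density 0 \<sigma> x) * indicator {..0} x \<partial>lborel)"
  proof -
    have "{\<omega> \<in> space M. Z \<omega> \<ge> 0} = (\<lambda>x. - Z x) -` {..0} \<inter> space M" by auto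
    thus ?thesis using distributed_emeasure[OF D2', of "{..0}"] by simp
  qed
  have e0: "emeasure M {\<omega> \<in> space M. Z \<omega> = 0} = 0"
  proof -
    have "{\<omega> \<in> space M. Z \<omega> = 0} = Z -` {0} \<inter> space M" by auto
    moreover have "(\<integral>\<^sup>+x. ennreal (normal_density 0 \<sigma> x) * indicator {0} x \<partial>lborel) = (\<integral>\<^sup>+x. 0 \<partial>(lborel::real measure))"
    proof (rule nn_integral_cong_AE)
      show "AE x in lborel. ennreal (normal_density 0 \<sigma> x) * indicator {0} x = 0"
        using AE_lborel_singleton[of "0::real"] by eventually_elim (auto simp: indicator_def)
    qed
    ultimately show ?thesis using distributed_emeasure[OF D, of "{0}"] by simp
  qed
  have m12: "prob {\<omega> \<in> space M. Z \<omega> \<le> 0} = prob {\<omega> \<in> space M. Z \<omega> \<ge> 0}"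
    using e1 e2 by (simp add: measure_def)
  have m0: "prob {\<omega> \<in> space M. Z \<omega> = 0} = 0" using e0 by (simp add: measure_def)
  have "prob {\<omega> \<in> space M. Z \<omega> \<ge> 0} = prob ({\<omega> \<in> space M. Z \<omega> > 0} \<union> {\<omega> \<in> space M. Z \<omega> = 0})"
    by (rule arg_cong[where f=prob]) auto
  also have "\<dots> = prob {\<omega> \<in> space M. Z \<omega> > 0} + prob {\<omega> \<in> space M. Z \<omega> = 0}"
    by (rule finite_measure_Union) auto
  finally have a: "prob {\<omega> \<in> space M. Z \<omega> \<ge> 0} = prob {\<omega> \<in> space M. Z \<omega> > 0}" using m0 by simp
  have "prob (space M) = prob ({\<omega> \<in> space M. Z \<omega> \<le> 0} \<union> {\<omega> \<in> space M. Z \<omega> > 0})"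
    by (rule arg_cong[where f=prob]) auto
  also have "\<dots> = prob {\<omega> \<in> space M. Z \<omega> \<le> 0} + prob {\<omega> \<in> space M. Z \<omega> > 0}"
    by (rule finite_measure_Union) auto
  finally show ?thesis using a m12 prob_space by simp
qed

lemma normal_pos:
  fixes Z :: "'w \<Rightarrow> real"
  assumes ps: "prob_space M" and D: "distributed M lborel Z (\<lambda>x. ennreal (normal_density 0 \<sigma> x))" and s: "0 < \<sigma>"
  shows "measure M {\<omega> \<in> space M. c < Z \<omega>} > 0"
proof -
  interpret prob_space M by (rule ps)
  have e: "emeasure M {\<omega> \<in> space M. c < Z \<omega>} = (\<integral>\<^sup>+x. ennreal (normal_density 0 \<sigma> x) * indicator {c<..} x \<partial>lborel)"
  proof -
    have "{\<omega> \<in> space M. c < Z \<omega>} = Z -` {c<..} \<inter> space M" by auto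
    thus ?thesis using distributed_emeasure[OF D, of "{c<..}"] by simp
  qed
  have "(\<integral>\<^sup>+x. ennreal (normal_density 0 \<sigma> x) * indicator {c<..} x \<partial>lborel) \<noteq> 0"
  proof
    assume "(\<integral>\<^sup>+x. ennreal (normal_density 0 \<sigma> x) * indicator {c<..} x \<partial>lborel) = 0"
    hence "AE x in lborel. ennreal (normal_density 0 \<sigma> x) * indicator {c<..} x = 0"
      by (subst (asm) nn_integral_0_iff_AE) auto
    hence "AE x in lborel. x \<notin> {c<..}"
    proof (eventually_elim)
      case (elim x)
      have "0 < normal_density 0 \<sigma> x" using normal_density_pos[OF s] by blast
      thus ?case using elim by (auto simp: indicator_def split: if_splits)
    qed
    hence "emeasure lborel {x \<in> space lborel. \<not> x \<notin> {c<..}} = 0"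
      by (subst (asm) AE_iff_measurable[OF _ refl]) auto
    moreover have "{c<..c+1} \<subseteq> {x \<in> space lborel. \<not> x \<notin> {c<..}}" by auto
    hence "emeasure lborel {c<..c+1} \<le> emeasure lborel {x \<in> space lborel. \<not> x \<notin> {c<..}}"
      by (intro emeasure_mono) auto
    ultimately show False by simp
  qed
  hence "emeasure M {\<omega> \<in> space M. c < Z \<omega>} \<noteq> 0" using e by simp
  moreover have "{\<omega> \<in> space M. c < Z \<omega>} \<in> sets M"
    using distributed_measurable[OF D] by (simp add: measurable_lborel2)
  ultimately show ?thesis by (simp add: emeasure_eq_measure zero_less_measure_iff)
qed

definition Ecnd :: "(real \<Rightarrow> 'w \<Rightarrow> real) \<Rightarrow> nat \<Rightarrow> nat \<Rightarrow> nat \<Rightarrow> 'w \<Rightarrow> bool" where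
  "Ecnd X k d j \<omega> \<longleftrightarrow> (if j < 2^k then
      (\<forall>l\<in>{1..2^d}. \<bar>X (8 * real j / 2^k + 8 * real l / 2^(k+d)) \<omega> - X (8 * real j / 2^k) \<omega>\<bar> \<le> 1/2)
      \<and> X (8 * real (Suc j) / 2^k) \<omega> \<le> X (8 * real j / 2^k) \<omega>
    else 1 + 2^k/2 < X (17/2) \<omega> - X 8 \<omega>)"

lemma pt_eq: "8 * real (j * 2^d + l) / 2^(k+d) = 8 * real j / 2^k + 8 * real l / (2::real)^(k+d)"
  by (simp add: power_add field_simps)

lemma pt_eq2: "8 * real j / 2^k + 8 * real ((2::nat)^d) / (2::real)^(k+d) = 8 * real (Suc j) / 2^k"
  by (simp add: power_add field_simps)

lemma indep_blocks:
  fixes X :: "real \<Rightarrow> 'w \<Rightarrow> real"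
  assumes BM: "std_brownian_motion M X"
  shows "measure M {\<omega> \<in> space M. \<forall>j\<in>{..(2::nat)^k}. Ecnd X k d j \<omega>}
       = (\<Prod>j\<in>{..(2::nat)^k}. measure M {\<omega> \<in> space M. Ecnd X k d j \<omega>})"
proof -
  have ps: "prob_space M" using BM by (simp add: std_brownian_motion_def)
  interpret prob_space M by (rule ps)
  have ind: "\<And>ts n. 0 \<le> ts 0 \<Longrightarrow> strict_mono ts \<Longrightarrow> indep_vars (\<lambda>_. borel) (\<lambda>i \<omega>. X (ts (Suc i)) \<omega> - X (ts i) \<omega>) {..<n}"
    using BM by (simp add: std_brownian_motion_def)
  define n where "n = k + d"
  define ts where "ts = (\<lambda>i::nat. if i \<le> 2^n then 8 * real i / 2^n else 8 + (real i - 2^n) / 2)"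
  have sm: "strict_mono ts" unfolding strict_mono_Suc_iff
  proof
    fix i :: nat
    consider "Suc i \<le> 2^n" | "i = 2^n" | "i > 2^n" by linarith
    then show "ts i < ts (Suc i)"
    proof cases
      case 1 thus ?thesis by (simp add: ts_def divide_strict_right_mono)
    next
      case 2 thus ?thesis by (simp add: ts_def)
    next
      case 3 thus ?thesis by (simp add: ts_def)
    qed
  qed
  have ts0: "0 \<le> ts 0" by (simp add: ts_def)
  define Y where "Y = (\<lambda>i \<omega>. X (ts (Suc i)) \<omega> - X (ts i) \<omega>)"
  have iv: "indep_vars (\<lambda>_. borel) Y {..<Suc (2^n)}" unfolding Y_def by (rule ind[OF ts0 sm])
  define K where "K = (\<lambda>j::nat. if j < 2^k then {j*2^d..<Suc j*2^d} else {2^n::nat})"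
  have pw: "(2::nat)^n = 2^k * 2^d" by (simp add: n_def power_add)
  have Ksub: "K j \<subseteq> {..<Suc (2^n)}" if "j \<in> {..2^k}" for j
  proof (cases "j < 2^k")
    case True
    hence "Suc j * 2^d \<le> 2^k * 2^d" by (intro mult_le_mono1) simp
    thus ?thesis using True pw by (auto simp: K_def)
  next
    case False thus ?thesis by (auto simp: K_def)
  qed
  have disj: "disjoint_family_on K {..2^k}"
    unfolding disjoint_family_on_def
  proof (intro ballI impI)
    fix i j :: nat assume ij: "i \<in> {..2^k}" "j \<in> {..2^k}" "i \<noteq> j"
    have up: "Suc a * 2^d \<le> 2^n" if "a < 2^k" for a :: nat
    proof -
      have "Suc a * 2^d \<le> 2^k * 2^d" using that by (intro mult_le_mono1) simp
      thus ?thesis using pw by simp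
    qed
    show "K i \<inter> K j = {}"
    proof (cases "i < 2^k \<and> j < 2^k")
      case True
      show ?thesis
      proof (cases "i < j")
        case True
        hence "Suc i * 2^d \<le> j * 2^d" by (intro mult_le_mono1) simp
        thus ?thesis using \<open>i < 2^k \<and> j < 2^k\<close> by (auto simp: K_def)
      next
        case False
        hence "j < i" using ij by simp
        hence "Suc j * 2^d \<le> i * 2^d" by (intro mult_le_mono1) simp
        thus ?thesis using \<open>i < 2^k \<and> j < 2^k\<close> by (auto simp: K_def)
      qed
    next
      case False
      hence "i = 2^k \<and> j < 2^k \<or> j = 2^k \<and> i < 2^k" using ij by auto
      thus ?thesis
      proof
        assume a: "i = 2^k \<and> j < 2^k"
        thus ?thesis using up[of j] by (auto simp: K_def)
      next
        assume a: "j = 2^k \<and> i < 2^k"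
        thus ?thesis using up[of i] by (auto simp: K_def)
      qed
    qed
  qed
  note iv2 = indep_vars_restrict[OF iv Ksub disj]
  define Qf where "Qf = (\<lambda>j (f :: nat \<Rightarrow> real). if j < 2^k then
      (\<forall>l\<in>{1..2^d}. \<bar>\<Sum>i\<in>{j*2^d..<j*2^d+l}. f i\<bar> \<le> 1/2) \<and> (\<Sum>i\<in>{j*2^d..<j*2^d+2^d}. f i) \<le> 0
      else 1 + 2^k/2 < f (2^n))"
  have Qm: "Qf j \<in> measurable (PiM (K j) (\<lambda>_. borel)) (count_space UNIV)" if "j \<in> {..2^k}" for j
  proof (cases "j < 2^k")
    case True
    have sm: "(\<lambda>f::nat\<Rightarrow>real. \<Sum>i\<in>{j*2^d..<j*2^d+l}. f i) \<in> borel_measurable (PiM (K j) (\<lambda>_. borel))" if "l \<le> 2^d" for l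
    proof (rule borel_measurable_sum)
      fix i assume "i \<in> {j*2^d..<j*2^d+l}"
      hence "i \<in> K j" using True that by (auto simp: K_def)
      thus "(\<lambda>f. f i) \<in> borel_measurable (PiM (K j) (\<lambda>_. borel))"
        using measurable_component_singleton[of i "K j" "\<lambda>_. borel"] by simp
    qed
    have p1: "Measurable.pred (PiM (K j) (\<lambda>_. borel)) (\<lambda>f::nat\<Rightarrow>real. \<forall>l\<in>{1..2^d}. \<bar>\<Sum>i\<in>{j*2^d..<j*2^d+l}. f i\<bar> \<le> 1/2)"
    proof (rule pred_intros_finite(3))
      fix l assume "l \<in> {1..(2::nat)^d}"
      hence "l \<le> 2^d" by simp
      show "Measurable.pred (PiM (K j) (\<lambda>_. borel)) (\<lambda>f::nat\<Rightarrow>real. \<bar>\<Sum>i\<in>{j*2^d..<j*2^d+l}. f i\<bar> \<le> 1/2)"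
        by (rule pred_le_const[where N=borel], rule borel_measurable_abs, rule sm[OF \<open>l \<le> 2^d\<close>]) simp
    qed simp
    have p2: "Measurable.pred (PiM (K j) (\<lambda>_. borel)) (\<lambda>f::nat\<Rightarrow>real. (\<Sum>i\<in>{j*2^d..<j*2^d+2^d}. f i) \<le> 0)"
      by (rule pred_le_const[where N=borel], rule sm) simp_all
    have "Measurable.pred (PiM (K j) (\<lambda>_. borel)) (\<lambda>f::nat\<Rightarrow>real. (\<forall>l\<in>{1..2^d}. \<bar>\<Sum>i\<in>{j*2^d..<j*2^d+l}. f i\<bar> \<le> 1/2) \<and> (\<Sum>i\<in>{j*2^d..<j*2^d+2^d}. f i) \<le> 0)"
      by (rule pred_intros_logic(3)[OF p1 p2])
    thus ?thesis using True by (simp add: Qf_def)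
  next
    case False
    hence "(2::nat)^n \<in> K j" by (simp add: K_def)
    hence "(\<lambda>f::nat\<Rightarrow>real. f (2^n)) \<in> borel_measurable (PiM (K j) (\<lambda>_. borel))"
      using measurable_component_singleton[of "2^n" "K j" "\<lambda>_. borel"] by simp
    hence "Measurable.pred (PiM (K j) (\<lambda>_. borel)) (\<lambda>f::nat\<Rightarrow>real. 1 + 2^k/2 < f (2^n))"
      by (rule pred_const_less[where N=borel]) simp_all
    thus ?thesis using False by (simp add: Qf_def)
  qed
  note iv3 = indep_vars_compose2[OF iv2 Qm]
  have eqv: "Qf j (restrict (\<lambda>i. Y i \<omega>) (K j)) \<longleftrightarrow> Ecnd X k d j \<omega>" if "j \<in> {..2^k}" for j \<omega>
  proof (cases "j < 2^k")
    case True
    have key: "(\<Sum>i\<in>{j*2^d..<j*2^d+l}. restrict (\<lambda>i. Y i \<omega>) (K j) i)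
        = X (8 * real j / 2^k + 8 * real l / 2^(k+d)) \<omega> - X (8 * real j / 2^k) \<omega>" if "l \<le> 2^d" for l
    proof -
      have "(\<Sum>i\<in>{j*2^d..<j*2^d+l}. restrict (\<lambda>i. Y i \<omega>) (K j) i) = (\<Sum>i\<in>{j*2^d..<j*2^d+l}. X (ts (Suc i)) \<omega> - X (ts i) \<omega>)"
        using True that by (intro sum.cong) (auto simp: K_def Y_def)
      also have "\<dots> = X (ts (j*2^d+l)) \<omega> - X (ts (j*2^d)) \<omega>"
        by (rule sum_Suc_diff') simp
      also have "ts (j*2^d+l) = 8 * real j / 2^k + 8 * real l / 2^(k+d)"
      proof -
        have "j*2^d + l \<le> 2^n"
        proof -
          have "Suc j * 2^d \<le> 2^k * 2^d" using True by (intro mult_le_mono1) simp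
          thus ?thesis using that pw by simp
        qed
        thus ?thesis using pt_eq[of j d l k] by (simp add: ts_def n_def)
      qed
      also have "ts (j*2^d) = 8 * real j / 2^k"
      proof -
        have "j*2^d \<le> 2^n"
        proof -
          have "j * 2^d \<le> 2^k * 2^d" using True by (intro mult_le_mono1) simp
          thus ?thesis using pw by simp
        qed
        thus ?thesis using pt_eq[of j d 0 k] by (simp add: ts_def n_def)
      qed
      finally show ?thesis .
    qed
    have "(\<forall>l\<in>{1..2^d}. \<bar>\<Sum>i\<in>{j*2^d..<j*2^d+l}. restrict (\<lambda>i. Y i \<omega>) (K j) i\<bar> \<le> 1/2)
       \<longleftrightarrow> (\<forall>l\<in>{1..2^d}. \<bar>X (8 * real j / 2^k + 8 * real l / 2^(k+d)) \<omega> - X (8 * real j / 2^k) \<omega>\<bar> \<le> 1/2)"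
      using key by auto
    moreover have "(\<Sum>i\<in>{j*2^d..<j*2^d+2^d}. restrict (\<lambda>i. Y i \<omega>) (K j) i) = X (8 * real (Suc j) / 2^k) \<omega> - X (8 * real j / 2^k) \<omega>"
      using key[of "2^d"] pt_eq2[of j k d] by simp
    ultimately show ?thesis using True by (simp add: Qf_def Ecnd_def)
  next
    case False
    hence "j = 2^k" using that by simp
    have "restrict (\<lambda>i. Y i \<omega>) (K j) (2^n) = X (17/2) \<omega> - X 8 \<omega>"
      using False by (simp add: K_def Y_def ts_def)
    thus ?thesis using False by (simp add: Qf_def Ecnd_def)
  qed
  have "prob (\<Inter>j\<in>{..2^k}. (\<lambda>\<omega>. Qf j (restrict (\<lambda>i. Y i \<omega>) (K j))) -` {True} \<inter> space M)
      = (\<Prod>j\<in>{..2^k}. prob ((\<lambda>\<omega>. Qf j (restrict (\<lambda>i. Y i \<omega>) (K j))) -` {True} \<inter> space M))"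
    by (rule indep_varsD[OF iv3]) auto
  moreover have "\<And>j. j \<in> {..2^k} \<Longrightarrow> (\<lambda>\<omega>. Qf j (restrict (\<lambda>i. Y i \<omega>) (K j))) -` {True} \<inter> space M = {\<omega> \<in> space M. Ecnd X k d j \<omega>}"
    using eqv by auto
  moreover have "(\<Inter>j\<in>{..2^k}. {\<omega> \<in> space M. Ecnd X k d j \<omega>}) = {\<omega> \<in> space M. \<forall>j\<in>{..(2::nat)^k}. Ecnd X k d j \<omega>}"
    by auto
  ultimately have "prob {\<omega> \<in> space M. \<forall>j\<in>{..(2::nat)^k}. Ecnd X k d j \<omega>} = (\<Prod>j\<in>{..2^k}. prob ((\<lambda>\<omega>. Qf j (restrict (\<lambda>i. Y i \<omega>) (K j))) -` {True} \<inter> space M))"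
    by simp
  also have "\<dots> = (\<Prod>j\<in>{..(2::nat)^k}. measure M {\<omega> \<in> space M. Ecnd X k d j \<omega>})"
  proof (rule prod.cong[OF refl])
    fix j :: nat assume "j \<in> {..2^k}"
    hence "(\<lambda>\<omega>. Qf j (restrict (\<lambda>i. Y i \<omega>) (K j))) -` {True} \<inter> space M = {\<omega> \<in> space M. Ecnd X k d j \<omega>}"
      using eqv by auto
    thus "prob ((\<lambda>\<omega>. Qf j (restrict (\<lambda>i. Y i \<omega>) (K j))) -` {True} \<inter> space M) = prob {\<omega> \<in> space M. Ecnd X k d j \<omega>}"
      by simp
  qed
  finally show ?thesis .
qed

lemma nat_floor_ex:
  fixes y :: real
  assumes "0 \<le> y"
  shows "\<exists>m::nat. real m \<le> y \<and> y < real m + 1"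
proof (intro exI[of _ "nat \<lfloor>y\<rfloor>"] conjI)
  have "real (nat \<lfloor>y\<rfloor>) = real_of_int \<lfloor>y\<rfloor>" using assms by simp
  thus "real (nat \<lfloor>y\<rfloor>) \<le> y" "y < real (nat \<lfloor>y\<rfloor>) + 1" by linarith+
qed

lemma pred_imp_const:
  assumes "K \<Longrightarrow> Measurable.pred M P"
  shows "Measurable.pred M (\<lambda>\<omega>. K \<longrightarrow> P \<omega>)"
proof (cases K)
  case True thus ?thesis using assms by (simp only: simp_thms)
next
  case False thus ?thesis by (simp only: simp_thms) (simp add: pred_def)
qed

lemma pt_eq0: "8 * real (j * 2^d) / 2^(k+d) = 8 * real j / (2::real)^k"
  by (simp add: power_add field_simps)

lemma pt_eq3: "8 * real j / 2^k + 8 * real (2 * l) / (2::real)^(k + Suc d) = 8 * real j / 2^k + 8 * real l / (2::real)^(k+d)"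
  by (simp add: field_simps)

lemma pos_event:
  fixes X :: "real \<Rightarrow> 'w \<Rightarrow> real"
  assumes BM: "std_brownian_motion M X"
  shows "\<exists>G\<in>sets M. G \<subseteq> {\<omega> \<in> space M. C (\<lambda>t. X t \<omega>)} \<and> 0 < measure M G"
proof -
  have ps: "prob_space M" using BM by (simp add: std_brownian_motion_def)
  interpret prob_space M by (rule ps)
  have meas: "\<And>t. 0 \<le> t \<Longrightarrow> X t \<in> borel_measurable M" using BM by (simp add: std_brownian_motion_def)
  have X0: "\<And>\<omega>. \<omega> \<in> space M \<Longrightarrow> X 0 \<omega> = 0" using BM by (simp add: std_brownian_motion_def)
  have cont: "\<And>\<omega>. \<omega> \<in> space M \<Longrightarrow> continuous_on {0..} (\<lambda>t. X t \<omega>)" using BM by (simp add: std_brownian_motion_def)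
  have distr: "\<And>s t. 0 \<le> s \<Longrightarrow> s < t \<Longrightarrow> distributed M lborel (\<lambda>\<omega>. X t \<omega> - X s \<omega>) (\<lambda>x. ennreal (normal_density 0 (sqrt (t - s)) x))"
    using BM by (simp add: std_brownian_motion_def)
  have predle: "Measurable.pred M (\<lambda>\<omega>. \<bar>X u \<omega> - X v \<omega>\<bar> \<le> c)" if "0 \<le> u" "0 \<le> v" for u v c
    by (rule pred_le_const[where N=borel]) (auto intro!: borel_measurable_abs borel_measurable_diff meas that)
  have predle2: "Measurable.pred M (\<lambda>\<omega>. X u \<omega> \<le> X v \<omega>)" if "0 \<le> u" "0 \<le> v" for u v
    using meas[OF that(1)] meas[OF that(2)] by measurable
  define V where "V = (\<lambda>k::nat. {\<omega> \<in> space M. \<forall>n a c. a \<le> (2::nat)^n \<longrightarrow> c \<le> 2^n \<longrightarrow>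
      \<bar>real a - real c\<bar> * 8 / 2^n \<le> 8 / 2^k \<longrightarrow> \<bar>X (8 * real a / 2^n) \<omega> - X (8 * real c / 2^n) \<omega>\<bar> \<le> 1/2})"
  have Vsets: "V k \<in> sets M" for k
  proof -
    have "Measurable.pred M (\<lambda>\<omega>. \<forall>n a c. a \<le> (2::nat)^n \<longrightarrow> c \<le> 2^n \<longrightarrow>
      \<bar>real a - real c\<bar> * 8 / 2^n \<le> 8 / 2^k \<longrightarrow> \<bar>X (8 * real a / 2^n) \<omega> - X (8 * real c / 2^n) \<omega>\<bar> \<le> 1/2)"
    proof (rule pred_intros_countable(1))
      fix n :: nat
      show "Measurable.pred M (\<lambda>\<omega>. \<forall>a c. a \<le> (2::nat)^n \<longrightarrow> c \<le> 2^n \<longrightarrow>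
        \<bar>real a - real c\<bar> * 8 / 2^n \<le> 8 / 2^k \<longrightarrow> \<bar>X (8 * real a / 2^n) \<omega> - X (8 * real c / 2^n) \<omega>\<bar> \<le> 1/2)"
      proof (rule pred_intros_countable(1))
        fix a :: nat
        show "Measurable.pred M (\<lambda>\<omega>. \<forall>c. a \<le> (2::nat)^n \<longrightarrow> c \<le> 2^n \<longrightarrow>
          \<bar>real a - real c\<bar> * 8 / 2^n \<le> 8 / 2^k \<longrightarrow> \<bar>X (8 * real a / 2^n) \<omega> - X (8 * real c / 2^n) \<omega>\<bar> \<le> 1/2)"
        proof (rule pred_intros_countable(1))
          fix c :: nat
          have "0 \<le> 8 * real a / 2^n" "0 \<le> 8 * real c / 2^n" by simp_all
          note pl = predle[OF this, of "1/2"]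
          show "Measurable.pred M (\<lambda>\<omega>. a \<le> (2::nat)^n \<longrightarrow> c \<le> 2^n \<longrightarrow>
            \<bar>real a - real c\<bar> * 8 / 2^n \<le> 8 / 2^k \<longrightarrow> \<bar>X (8 * real a / 2^n) \<omega> - X (8 * real c / 2^n) \<omega>\<bar> \<le> 1/2)"
            by (rule pred_imp_const, rule pred_imp_const, rule pred_imp_const, rule pl)
        qed
      qed
    qed
    from this[unfolded pred_def] show ?thesis unfolding V_def .
  qed
  have Vinc: "incseq V"
  proof (rule incseq_SucI)
    fix k :: nat
    have "8 / 2^(Suc k) \<le> (8::real) / 2^k" by (simp add: field_simps)
    thus "V k \<subseteq> V (Suc k)" unfolding V_def by (auto intro: order_trans)
  qed
  have Vun: "(\<Union>k. V k) = space M"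
  proof
    show "(\<Union>k. V k) \<subseteq> space M" unfolding V_def by auto
  next
    show "space M \<subseteq> (\<Union>k. V k)"
    proof
      fix \<omega> assume \<omega>: "\<omega> \<in> space M"
      have "continuous_on {0..8} (\<lambda>t. X t \<omega>)" by (rule continuous_on_subset[OF cont[OF \<omega>]]) auto
      hence "uniformly_continuous_on {0..8} (\<lambda>t. X t \<omega>)" by (rule compact_uniformly_continuous) simp
      then obtain e where e: "e > 0" "\<And>s t. s \<in> {0..8} \<Longrightarrow> t \<in> {0..8} \<Longrightarrow> dist s t < e \<Longrightarrow> dist (X s \<omega>) (X t \<omega>) < 1/2"
        unfolding uniformly_continuous_on_def by (metis half_gt_zero_iff zero_less_one)
      obtain k where k: "8 / e < 2^k" using real_arch_pow[of 2 "8/e"] by auto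
      have k': "8 / 2^k < e" using k e by (simp add: field_simps)
      have "\<omega> \<in> V k" unfolding V_def
      proof (safe intro!: \<omega>)
        fix n a c :: nat assume a: "a \<le> 2^n" and c: "c \<le> 2^n" and ac: "\<bar>real a - real c\<bar> * 8 / 2^n \<le> 8 / 2^k"
        have "8 * real a / 2^n \<in> {0..8}" using a by (auto simp: field_simps)
        moreover have "8 * real c / 2^n \<in> {0..8}" using c by (auto simp: field_simps)
        moreover have "dist (8 * real a / 2^n) (8 * real c / 2^n) < e"
        proof -
          have "dist (8 * real a / 2^n) (8 * real c / 2^n) = \<bar>real a - real c\<bar> * 8 / 2^n"
          proof -
            have "8 * real a / 2^n - 8 * real c / 2^n = (real a - real c) * (8 / 2^n)" by (simp add: field_simps)
            moreover have "\<bar>(real a - real c) * (8 / 2^n)\<bar> = \<bar>real a - real c\<bar> * (8 / (2::real)^n)"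
              unfolding abs_mult by simp
            ultimately have "\<bar>8 * real a / 2^n - 8 * real c / 2^n\<bar> = \<bar>real a - real c\<bar> * (8 / 2^n)" by simp
            thus ?thesis by (simp add: dist_real_def)
          qed
          thus ?thesis using ac k' by linarith
        qed
        ultimately have "dist (X (8 * real a / 2^n) \<omega>) (X (8 * real c / 2^n) \<omega>) < 1/2"
          by (rule e(2))
        thus "\<bar>X (8 * real a / 2^n) \<omega> - X (8 * real c / 2^n) \<omega>\<bar> \<le> 1/2"
          by (simp add: dist_real_def)
      qed
      thus "\<omega> \<in> (\<Union>k. V k)" by blast
    qed
  qed
  have "(\<lambda>k. prob (V k)) \<longlonglongrightarrow> prob (\<Union>k. V k)"
    by (rule finite_Lim_measure_incseq) (use Vsets Vinc in auto)
  hence "(\<lambda>k. prob (V k)) \<longlonglongrightarrow> 1" using Vun prob_space by simp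
  hence "eventually (\<lambda>k. 3/4 < prob (V k)) sequentially" by (rule order_tendstoD) simp
  then obtain k where pk: "3/4 < prob (V k)" by (auto simp: eventually_sequentially)
  define p0 where "p0 = prob {\<omega> \<in> space M. 1 + 2^k/2 < X (17/2) \<omega> - X 8 \<omega>}"
  have p0: "0 < p0"
  proof -
    have "(0::real) \<le> 8" "(8::real) < 17/2" by simp_all
    note D = distr[OF this]
    have "0 < sqrt (17/2 - 8::real)" by simp
    from normal_pos[OF ps D this] show ?thesis unfolding p0_def .
  qed
  define E where "E = (\<lambda>d j. {\<omega> \<in> space M. Ecnd X k d j \<omega>})"
  have Esets: "E d j \<in> sets M" for d j
  proof (cases "j < 2^k")
    case True
    have "Measurable.pred M (\<lambda>\<omega>. (\<forall>l\<in>{1..2^d}. \<bar>X (8 * real j / 2^k + 8 * real l / 2^(k+d)) \<omega> - X (8 * real j / 2^k) \<omega>\<bar> \<le> 1/2)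
      \<and> X (8 * real (Suc j) / 2^k) \<omega> \<le> X (8 * real j / 2^k) \<omega>)"
    proof (rule pred_intros_logic(3))
      show "Measurable.pred M (\<lambda>\<omega>. \<forall>l\<in>{1..2^d}. \<bar>X (8 * real j / 2^k + 8 * real l / 2^(k+d)) \<omega> - X (8 * real j / 2^k) \<omega>\<bar> \<le> 1/2)"
      proof (rule pred_intros_finite(3))
        fix l :: nat
        show "Measurable.pred M (\<lambda>\<omega>. \<bar>X (8 * real j / 2^k + 8 * real l / 2^(k+d)) \<omega> - X (8 * real j / 2^k) \<omega>\<bar> \<le> 1/2)"
          by (rule predle) simp_all
      qed simp
      show "Measurable.pred M (\<lambda>\<omega>. X (8 * real (Suc j) / 2^k) \<omega> \<le> X (8 * real j / 2^k) \<omega>)"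
        by (rule predle2) simp_all
    qed
    from this[unfolded pred_def] show ?thesis using True unfolding E_def Ecnd_def by simp
  next
    case False
    have "Measurable.pred M (\<lambda>\<omega>. 1 + 2^k/2 < X (17/2) \<omega> - X 8 \<omega>)"
      by (rule pred_const_less[where N=borel]) (auto intro!: borel_measurable_diff meas)
    from this[unfolded pred_def] show ?thesis using False unfolding E_def Ecnd_def by simp
  qed
  have Ehalf: "1/4 \<le> prob (E d j)" if j: "j < 2^k" for d j
  proof -
    define s where "s = 8 * real j / (2::real)^k"
    define t where "t = 8 * real (Suc j) / (2::real)^k"
    have st: "0 \<le> s" "s < t" by (simp_all add: s_def t_def divide_strict_right_mono)
    define A where "A = {\<omega> \<in> space M. X t \<omega> - X s \<omega> \<le> 0}"
    have "0 < sqrt (t - s)" using st by simp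
    from normal_half[OF ps distr[OF st] this] have pA: "prob A = 1/2" unfolding A_def .
    have Asets: "A \<in> sets M"
    proof -
      have "Measurable.pred M (\<lambda>\<omega>. X t \<omega> - X s \<omega> \<le> 0)"
        by (rule pred_le_const[where N=borel]) (use st in \<open>auto intro!: borel_measurable_diff meas\<close>)
      from this[unfolded pred_def] show ?thesis unfolding A_def .
    qed
    have sub: "A \<inter> V k \<subseteq> E d j"
    proof
      fix \<omega> assume \<omega>: "\<omega> \<in> A \<inter> V k"
      have pw: "(2::nat)^(k+d) = 2^k * 2^d" by (simp add: power_add)
      have Vc: "\<And>n a c. a \<le> (2::nat)^n \<Longrightarrow> c \<le> 2^n \<Longrightarrow> \<bar>real a - real c\<bar> * 8 / 2^n \<le> 8 / 2^k \<Longrightarrow>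
          \<bar>X (8 * real a / 2^n) \<omega> - X (8 * real c / 2^n) \<omega>\<bar> \<le> 1/2"
        using \<omega> unfolding V_def by blast
      have "\<forall>l\<in>{1..2^d}. \<bar>X (8 * real j / 2^k + 8 * real l / 2^(k+d)) \<omega> - X (8 * real j / 2^k) \<omega>\<bar> \<le> 1/2"
      proof
        fix l assume l: "l \<in> {1..(2::nat)^d}"
        have "Suc j * 2^d \<le> 2^k * 2^d" using j by (intro mult_le_mono1) simp
        hence a: "j * 2^d + l \<le> 2^(k+d)" using l pw by simp
        have c: "j * 2^d \<le> (2::nat)^(k+d)" using a by linarith
        have "\<bar>real (j * 2^d + l) - real (j * 2^d)\<bar> * 8 / 2^(k+d) = real l * 8 / 2^(k+d)" by simp
        also have "\<dots> \<le> real ((2::nat)^d) * 8 / 2^(k+d)"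
          using l by (intro divide_right_mono mult_right_mono) simp_all
        also have "\<dots> = 8 / 2^k" by (simp add: power_add)
        finally have "\<bar>X (8 * real (j * 2^d + l) / 2^(k+d)) \<omega> - X (8 * real (j * 2^d) / 2^(k+d)) \<omega>\<bar> \<le> 1/2"
          by (intro Vc a c)
        thus "\<bar>X (8 * real j / 2^k + 8 * real l / 2^(k+d)) \<omega> - X (8 * real j / 2^k) \<omega>\<bar> \<le> 1/2"
          unfolding pt_eq pt_eq0 .
      qed
      moreover have "X (8 * real (Suc j) / 2^k) \<omega> \<le> X (8 * real j / 2^k) \<omega>"
        using \<omega> unfolding A_def s_def t_def by simp
      ultimately show "\<omega> \<in> E d j" using j \<omega> unfolding E_def Ecnd_def A_def by simp
    qed
    have "A \<subseteq> (A \<inter> V k) \<union> (space M - V k)" using Asets sets.sets_into_space by blast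
    hence "prob A \<le> prob ((A \<inter> V k) \<union> (space M - V k))"
      using Asets Vsets by (intro finite_measure_mono) auto
    also have "\<dots> \<le> prob (A \<inter> V k) + prob (space M - V k)"
      using Asets Vsets by (intro measure_Un_le) auto
    also have "prob (space M - V k) = 1 - prob (V k)" using Vsets by (rule prob_compl)
    also have "prob (A \<inter> V k) \<le> prob (E d j)" using sub Esets by (rule finite_measure_mono)
    finally show ?thesis using pA pk by linarith
  qed
  have Elast: "prob (E d (2^k)) = p0" for d unfolding E_def Ecnd_def p0_def by simp
  define c0 where "c0 = (\<Prod>j\<in>{..(2::nat)^k}. if j < 2^k then 1/4 else p0)"
  have c0: "0 < c0" unfolding c0_def using p0 by (intro prod_pos) auto
  define G where "G = (\<lambda>d. {\<omega> \<in> space M. \<forall>j\<in>{..(2::nat)^k}. Ecnd X k d j \<omega>})"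
  have Gp: "c0 \<le> prob (G d)" for d
  proof -
    have "prob (G d) = (\<Prod>j\<in>{..(2::nat)^k}. prob (E d j))"
      unfolding G_def E_def by (rule indep_blocks[OF BM])
    moreover have "c0 \<le> (\<Prod>j\<in>{..(2::nat)^k}. prob (E d j))"
      unfolding c0_def
    proof (rule prod_mono)
      fix j assume "j \<in> {..(2::nat)^k}"
      thus "0 \<le> (if j < 2^k then 1/4 else p0) \<and> (if j < 2^k then 1/4 else p0) \<le> prob (E d j)"
        using Ehalf[of j d] Elast[of d] p0 by auto
    qed
    ultimately show ?thesis by simp
  qed
  have Gsets: "G d \<in> sets M" for d
  proof -
    have "G d = (\<Inter>j\<in>{..(2::nat)^k}. E d j)" unfolding G_def E_def by auto
    also have "\<dots> \<in> sets M" using Esets by (intro sets.finite_INT) auto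
    finally show ?thesis .
  qed
  have Gdec: "decseq G"
  proof (rule decseq_SucI)
    fix d
    show "G (Suc d) \<subseteq> G d"
    proof
      fix \<omega> assume \<omega>: "\<omega> \<in> G (Suc d)"
      have "Ecnd X k d j \<omega>" if j: "j \<in> {..(2::nat)^k}" for j
      proof (cases "j < 2^k")
        case True
        have E1: "Ecnd X k (Suc d) j \<omega>" using \<omega> j unfolding G_def by blast
        have "\<forall>l\<in>{1..2^d}. \<bar>X (8 * real j / 2^k + 8 * real l / 2^(k+d)) \<omega> - X (8 * real j / 2^k) \<omega>\<bar> \<le> 1/2"
        proof
          fix l assume l: "l \<in> {1..(2::nat)^d}"
          hence "2 * l \<in> {1..2^(Suc d)}" by simp
          moreover have "\<forall>l\<in>{1..2^(Suc d)}. \<bar>X (8 * real j / 2^k + 8 * real l / 2^(k + Suc d)) \<omega> - X (8 * real j / 2^k) \<omega>\<bar> \<le> 1/2"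
            using E1 unfolding Ecnd_def if_P[OF True] by blast
          ultimately have "\<bar>X (8 * real j / 2^k + 8 * real (2*l) / 2^(k + Suc d)) \<omega> - X (8 * real j / 2^k) \<omega>\<bar> \<le> 1/2"
            by blast
          thus "\<bar>X (8 * real j / 2^k + 8 * real l / 2^(k+d)) \<omega> - X (8 * real j / 2^k) \<omega>\<bar> \<le> 1/2"
            unfolding pt_eq3 .
        qed
        moreover have "X (8 * real (Suc j) / 2^k) \<omega> \<le> X (8 * real j / 2^k) \<omega>"
          using E1 unfolding Ecnd_def if_P[OF True] by blast
        ultimately show ?thesis unfolding Ecnd_def if_P[OF True] by blast
      next
        case False
        have "Ecnd X k (Suc d) j \<omega>" using \<omega> j unfolding G_def by blast
        thus ?thesis unfolding Ecnd_def if_not_P[OF False] .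
      qed
      thus "\<omega> \<in> G d" using \<omega> unfolding G_def by blast
    qed
  qed
  have "(\<lambda>d. prob (G d)) \<longlonglongrightarrow> prob (\<Inter>d. G d)"
    by (rule finite_Lim_measure_decseq) (use Gsets Gdec in auto)
  hence GGp: "c0 \<le> prob (\<Inter>d. G d)" by (rule LIMSEQ_le_const) (use Gp in auto)
  have GGsets: "(\<Inter>d. G d) \<in> sets M" using Gsets by auto
  have GGsub: "(\<Inter>d. G d) \<subseteq> {\<omega> \<in> space M. C (\<lambda>t. X t \<omega>)}"
  proof
    fix \<omega> assume \<omega>: "\<omega> \<in> (\<Inter>d. G d)"
    hence sp: "\<omega> \<in> space M" unfolding G_def by auto
    have all: "\<And>d j. j \<le> 2^k \<Longrightarrow> Ecnd X k d j \<omega>" using \<omega> unfolding G_def by auto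
    have Xz: "X 0 \<omega> = 0" using X0 sp .
    have bpos: "X (8 * real j / 2^k) \<omega> \<le> 0 \<and> - (real j / 2) \<le> X (8 * real j / 2^k) \<omega>" if "j \<le> 2^k" for j
      using that
    proof (induction j)
      case 0 thus ?case using Xz by simp
    next
      case (Suc j)
      hence j: "j < 2^k" by simp
      have IH: "X (8 * real j / 2^k) \<omega> \<le> 0 \<and> - (real j / 2) \<le> X (8 * real j / 2^k) \<omega>" using Suc j by simp
      have E0: "Ecnd X k 0 j \<omega>" using all j by simp
      have "\<forall>l\<in>{1..2^0}. \<bar>X (8 * real j / 2^k + 8 * real l / 2^(k+0)) \<omega> - X (8 * real j / 2^k) \<omega>\<bar> \<le> 1/2"
        using E0 unfolding Ecnd_def if_P[OF j] by blast
      hence "\<bar>X (8 * real j / 2^k + 8 * real ((2::nat)^0) / 2^(k+0)) \<omega> - X (8 * real j / 2^k) \<omega>\<bar> \<le> 1/2"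
        by simp
      hence a: "\<bar>X (8 * real (Suc j) / 2^k) \<omega> - X (8 * real j / 2^k) \<omega>\<bar> \<le> 1/2"
        unfolding pt_eq2 .
      have b: "X (8 * real (Suc j) / 2^k) \<omega> \<le> X (8 * real j / 2^k) \<omega>"
        using E0 unfolding Ecnd_def if_P[OF j] by blast
      have a': "X (8 * real j / 2^k) \<omega> - 1/2 \<le> X (8 * real (Suc j) / 2^k) \<omega>" using a by (simp only: abs_le_iff) linarith
      have "real (Suc j) / 2 = real j / 2 + 1/2" by simp
      thus ?case using a' b IH by linarith
    qed
    have grid: "X (8 * real j / 2^k + 8 * real l / 2^(k+d)) \<omega> \<le> 1/2" if j: "j < 2^k" and l: "l \<le> 2^d" for j l d
    proof (cases "l = 0")
      case True thus ?thesis using bpos[of j] j by simp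
    next
      case False
      hence "l \<in> {1..2^d}" using l by simp
      moreover have "\<forall>l\<in>{1..2^d}. \<bar>X (8 * real j / 2^k + 8 * real l / 2^(k+d)) \<omega> - X (8 * real j / 2^k) \<omega>\<bar> \<le> 1/2"
        using all[of j d] j unfolding Ecnd_def if_P[OF j] by simp
      ultimately have "\<bar>X (8 * real j / 2^k + 8 * real l / 2^(k+d)) \<omega> - X (8 * real j / 2^k) \<omega>\<bar> \<le> 1/2" by blast
      thus ?thesis using bpos[of j] j by (simp add: abs_if split: if_splits)
    qed
    have X8: "X 8 \<omega> \<le> 0 \<and> - (2^k / 2) \<le> X 8 \<omega>"
      using bpos[of "2^k"] by simp
    have le: "X t \<omega> \<le> 1/2" if t: "t \<in> {0..8}" for t
    proof (rule ccontr)
      assume "\<not> X t \<omega> \<le> 1/2"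
      hence xt: "X t \<omega> - 1/2 > 0" by simp
      show False
      proof (cases "t = 8")
        case True thus False using X8 xt by simp
      next
        case False
        hence t8: "t < 8" using t by simp
        have "t \<in> {0..}" using t by simp
        then obtain \<eta> where \<eta>: "\<eta> > 0" "\<And>t'. t' \<in> {0..} \<Longrightarrow> dist t' t < \<eta> \<Longrightarrow> dist (X t' \<omega>) (X t \<omega>) < X t \<omega> - 1/2"
          using cont[OF sp] xt unfolding continuous_on_iff by metis
        obtain d where d: "8 / \<eta> < 2^d" using real_arch_pow[of 2 "8/\<eta>"] by auto
        define P :: real where "P = 2^(k+d)"
        define Q :: real where "Q = 2^k"
        have PQ: "P = Q * 2^d" unfolding P_def Q_def by (simp add: power_add)
        have Qp: "Q > 0" unfolding Q_def by simp
        have Pp: "P > 0" unfolding P_def by simp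
        have "2^d \<le> P" unfolding PQ using Qp by (simp add: Q_def)
        hence "\<eta> * 2^d \<le> \<eta> * P" using \<eta>(1) by (intro mult_left_mono) simp_all
        moreover have "8 < \<eta> * 2^d" using d \<eta>(1) by (simp add: field_simps)
        ultimately have "8 < \<eta> * P" by linarith
        hence dP: "8 / P < \<eta>" using Pp by (simp add: field_simps)
        obtain j :: nat where j: "real j \<le> t * Q / 8" "t * Q / 8 < real j + 1"
          using nat_floor_ex[of "t * Q / 8"] t Qp by auto
        define bj where "bj = 8 * real j / Q"
        have bjt: "bj \<le> t" using j(1) Qp unfolding bj_def by (simp add: field_simps)
        have tbj: "t - bj < 8 / Q"
        proof -
          have "t * Q < 8 * real j + 8" using j(2) by linarith
          moreover have "(t - bj) * Q = t * Q - 8 * real j" unfolding bj_def using Qp by (simp add: field_simps)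
          ultimately have "(t - bj) * Q < 8" by linarith
          thus ?thesis using Qp by (simp add: pos_less_divide_eq)
        qed
        have jk: "j < 2^k"
        proof -
          have "t * Q < 8 * Q" using mult_strict_right_mono[OF t8 Qp] .
          hence "real j < Q" using j(1) by linarith
          hence "real j < real ((2::nat)^k)" unfolding Q_def by simp
          thus ?thesis by (simp only: of_nat_less_iff)
        qed
        define y where "y = (t - bj) * P / 8"
        have y0: "0 \<le> y" using bjt Pp unfolding y_def by simp
        obtain l :: nat where l: "real l \<le> y" "y < real l + 1" using nat_floor_ex[OF y0] by auto
        have "(t - bj) * P < (8 / Q) * P" using mult_strict_right_mono[OF tbj Pp] .
        also have "(8 / Q) * P = 8 * 2^d" using PQ Qp by simp
        finally have "y < 2^d" unfolding y_def by simp
        hence l2: "real l < 2^d" using l by linarith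
        have "real l < real ((2::nat)^d)" unfolding of_nat_power of_nat_numeral by (rule l2)
        hence ld: "l \<le> 2^d" by (simp only: of_nat_less_iff less_imp_le)
        define p where "p = bj + 8 * real l / P"
        have tp: "t - p = 8 * (y - real l) / P" unfolding p_def y_def using Pp by (simp add: field_simps)
        have "0 \<le> t - p" unfolding tp using l Pp by simp
        moreover have "t - p < 8 / P" unfolding tp using l Pp by (simp add: divide_strict_right_mono)
        ultimately have "dist p t < \<eta>" using dP by (simp add: dist_real_def)
        moreover have "p \<in> {0..}" unfolding p_def bj_def using Qp Pp by simp
        ultimately have "dist (X p \<omega>) (X t \<omega>) < X t \<omega> - 1/2" using \<eta>(2) by blast
        hence "X p \<omega> > 1/2" by (simp add: dist_real_def abs_if split: if_splits)
        moreover have "X p \<omega> \<le> 1/2" using grid[OF jk ld] unfolding p_def bj_def P_def Q_def .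
        ultimately show False by simp
      qed
    qed
    have "Ecnd X k 0 (2^k) \<omega>" using all by simp
    hence "1 + 2^k/2 < X (17/2) \<omega> - X 8 \<omega>" unfolding Ecnd_def by simp
    hence v: "1 \<le> X (17/2) \<omega>" using X8 by simp
    have "C (\<lambda>t. X t \<omega>)" unfolding C_def
    proof
      show "\<forall>t\<in>{0..8}. X t \<omega> < 1" using le by force
      show "\<exists>v\<in>{8<..<9}. 1 \<le> X v \<omega>" using v by (intro bexI[of _ "17/2"]) auto
    qed
    thus "\<omega> \<in> {\<omega> \<in> space M. C (\<lambda>t. X t \<omega>)}" using sp by simp
  qed
  show ?thesis using GGsets GGsub GGp c0 by (intro bexI[of _ "\<Inter>d. G d"]) auto
qed

theorem lemma5p3:
  fixes M :: "'w measure" and X :: "real \<Rightarrow> 'w \<Rightarrow> real"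
  assumes "std_brownian_motion M X"
  shows "(AE \<omega> in M. sat L_p (\<lambda>t. X t \<omega>) 0 psi \<longleftrightarrow>
                       hit_time (\<lambda>t. X t \<omega>) \<in> {ereal 8<..<ereal 9})
       \<and> measure M {\<omega> \<in> space M. sat L_p (\<lambda>t. X t \<omega>) 0 psi} > 0"
proof -
  have ps: "prob_space M" using assms by (simp add: std_brownian_motion_def)
  interpret prob_space M by (rule ps)
  have meas: "\<And>t. 0 \<le> t \<Longrightarrow> X t \<in> borel_measurable M" using assms by (simp add: std_brownian_motion_def)
  have X0: "\<And>\<omega>. \<omega> \<in> space M \<Longrightarrow> X 0 \<omega> = 0" using assms by (simp add: std_brownian_motion_def)
  have cont: "\<And>\<omega>. \<omega> \<in> space M \<Longrightarrow> continuous_on {0..} (\<lambda>t. X t \<omega>)" using assms by (simp add: std_brownian_motion_def)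
  have eq1: "sat L_p (\<lambda>t. X t \<omega>) 0 psi \<longleftrightarrow> Cp (\<lambda>t. X t \<omega>)" if "\<omega> \<in> space M" for \<omega>
    using psi_iff[OF cont[OF that]] X0[OF that] by simp
  have eq2: "hit_time (\<lambda>t. X t \<omega>) \<in> {ereal 8<..<ereal 9} \<longleftrightarrow> Cp (\<lambda>t. X t \<omega>)" if "\<omega> \<in> space M" for \<omega>
    using hit_iff[OF cont[OF that]] .
  have eq3: "sat L_p (\<lambda>t. X t \<omega>) 0 psi \<longleftrightarrow> Cq (\<lambda>t. X t \<omega>)" if "\<omega> \<in> space M" for \<omega>
    using eq1[OF that] Cp_iff_C[OF cont[OF that]] C_iff_Cq[OF cont[OF that]] by simp
  have ae: "AE \<omega> in M. sat L_p (\<lambda>t. X t \<omega>) 0 psi \<longleftrightarrow> hit_time (\<lambda>t. X t \<omega>) \<in> {ereal 8<..<ereal 9}"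
  proof (rule AE_I2)
    fix \<omega> assume "\<omega> \<in> space M"
    thus "sat L_p (\<lambda>t. X t \<omega>) 0 psi \<longleftrightarrow> hit_time (\<lambda>t. X t \<omega>) \<in> {ereal 8<..<ereal 9}"
      using eq1 eq2 by blast
  qed
  have S: "{\<omega> \<in> space M. sat L_p (\<lambda>t. X t \<omega>) 0 psi} = {\<omega> \<in> space M. Cq (\<lambda>t. X t \<omega>)}"
    using eq3 by blast
  have Ssets: "{\<omega> \<in> space M. sat L_p (\<lambda>t. X t \<omega>) 0 psi} \<in> sets M"
    unfolding S by (rule Cq_meas[OF meas])
  obtain G where G: "G \<in> sets M" "G \<subseteq> {\<omega> \<in> space M. C (\<lambda>t. X t \<omega>)}" "0 < measure M G"
    using pos_event[OF assms] by blast
  have "G \<subseteq> {\<omega> \<in> space M. sat L_p (\<lambda>t. X t \<omega>) 0 psi}"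
  proof
    fix \<omega> assume "\<omega> \<in> G"
    hence "\<omega> \<in> space M" "C (\<lambda>t. X t \<omega>)" using G(2) by auto
    thus "\<omega> \<in> {\<omega> \<in> space M. sat L_p (\<lambda>t. X t \<omega>) 0 psi}"
      using eq1 Cp_iff_C[OF cont] by blast
  qed
  hence "measure M G \<le> measure M {\<omega> \<in> space M. sat L_p (\<lambda>t. X t \<omega>) 0 psi}"
    using Ssets by (rule finite_measure_mono)
  with G(3) ae show ?thesis by simp
qed


end
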